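(* Let $\epsilon>0$, $\eta:=\mathrm{i}\epsilon$ and $p:=\frac12-\frac1\eta=\frac12+\frac{\mathrm{i}}{\epsilon}$. Let $\mathfrak{H}_a$ be the Hilbert space with orthonormal basis $\{|j,k,l\rangle: j,k,l\in\mathbb{Z}_{\ge0}\}$ and define on it the operators $\mathbf{b}_{\uparrow}^\dagger|j,k,l\rangle=\sqrt{j+1}|j+1,k,l\rangle$, $\mathbf{b}_{\uparrow}|j,k,l\rangle=\sqrt{j}|j-1,k,l\rangle$, $\mathbf{b}_{\downarrow}^\dagger|j,k,l\rangle=\sqrt{k+1}|j,k+1,l\rangle$, $\mathbf{b}_{\downarrow}|j,k,l\rangle=\sqrt{k}|j,k-1,l\rangle$, $\mathbf{s}^{+}|j,k,l\rangle=l|j,k,l-1\rangle$, $\mathbf{s}^{-}|j,k,l\rangle=(2p-l)|j,k,l+1\rangle$, $\mathbf{s}^{z}|j,k,l\rangle=(p-l)|j,k,l\rangle$. Set \begin{align*} &\mathbf{t}^{+}=\mathbf{b}_{\uparrow},\quad \mathbf{t}^{-}=\eta\,\mathbf{b}_{\uparrow}^\dagger,\quad \mathbf{u}^{+}=\eta\,\mathbf{b}_{\downarrow},\quad \mathbf{u}^{-}=\mathbf{b}_{\downarrow}^\dagger,\\ &\mathbf{v}^{+}=\eta(\mathbf{b}_{\uparrow}\mathbf{b}_{\downarrow}+\mathbf{s}^{+}),\quad \mathbf{v}^{-}=\eta(\mathbf{b}_{\uparrow}^\dagger\mathbf{b}_{\downarrow}^\dagger-\mathbf{s}^{-}),\\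 &\mathbf{l}^{\uparrow}=\eta\big(\mathbf{b}_{\uparrow}^\dagger\mathbf{b}_{\uparrow}+\tfrac12-\mathbf{s}^{z}\big),\quad \mathbf{l}^{\downarrow}=\eta\big(\mathbf{b}_{\downarrow}^\dagger\mathbf{b}_{\downarrow}+\tfrac12-\mathbf{s}^{z}\big),\quad \mathbf{l}^{0}=\mathbb{1}, \end{align*} and $|\mathrm{vac}\rangle=|0,0,0\rangle$. Then these operators generate an irreducible representation of the Lie algebra $\mathfrak{g}$ defined by the commutation relations \begin{align*} &[\mathbf{u}^{+},\mathbf{t}^{\pm}]=[\mathbf{u}^{-},\mathbf{t}^{\pm}]=[\mathbf{u}^{\pm},\mathbf{v}^{\pm}]=[\mathbf{t}^{\pm},\mathbf{v}^{\pm}]=0,\quad [\mathbf{l}^{\uparrow},\mathbf{u}^{\pm}]=[\mathbf{l}^{\downarrow},\mathbf{t}^{\pm}]=[\mathbf{l}^{\uparrow},\mathbf{l}^{\downarrow}]=0,\\ &[\mathbf{l}^{\uparrow},\mathbf{t}^{\pm}]=\mp\eta\,\mathbf{t}^{\pm},\quad [\mathbf{l}^{\downarrow},\mathbf{u}^{\pm}]=\mp\eta\,\mathbf{u}^{\pm},\quad [\mathbf{u}^{+},\mathbf{v}^{\mp}]=\pm\mathbf{t}^{\mp},\quad [\mathbf{t}^{\pm},\mathbf{v}^{\mp}]=\pm\eta\,\mathbf{u}^{\mp},\\ &[\mathbf{l}^{\uparrow},\mathbf{v}^{\pm}]=[\mathbf{l}^{\downarrow},\mathbf{v}^{\pm}]=\mp\eta\,\mathbf{v}^{\pm},\quad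 [\mathbf{v}^{+},\mathbf{v}^{-}]=\eta(\mathbf{l}^{\uparrow}+\mathbf{l}^{\downarrow}),\quad [\mathbf{t}^{+},\mathbf{t}^{-}]=[\mathbf{u}^{+},\mathbf{u}^{-}]=\eta\,\mathbf{l}^{0},\\ &[\mathbf{l}^{\uparrow},\mathbf{l}^{0}]=[\mathbf{l}^{\downarrow},\mathbf{l}^{0}]=[\mathbf{u}^{\pm},\mathbf{l}^{0}]=[\mathbf{v}^{\pm},\mathbf{l}^{0}]=[\mathbf{t}^{\pm},\mathbf{l}^{0}]=0, \end{align*} which moreover satisfies the boundary requirements $\mathbf{l}^{\uparrow}|\mathrm{vac}\rangle=\mathbf{l}^{0}|\mathrm{vac}\rangle=\mathbf{l}^{\downarrow}|\mathrm{vac}\rangle=|\mathrm{vac}\rangle$, $\langle\mathrm{vac}|\mathbf{l}^{\uparrow}=\langle\mathrm{vac}|\mathbf{l}^{0}=\langle\mathrm{vac}|\mathbf{l}^{\downarrow}=\langle\mathrm{vac}|$, $\mathbf{t}^{+}|\mathrm{vac}\rangle=\mathbf{u}^{+}|\mathrm{vac}\rangle=\mathbf{v}^{+}|\mathrm{vac}\rangle=0$, $\langle\mathrm{vac}|\mathbf{t}^{-}=\langle\mathrm{vac}|\mathbf{u}^{-}=\langle\mathrm{vac}|\mathbf{v}^{-}=0$.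
   Context: Operators are understood on the dense domain of finite linear combinations of basis vectors; $\mathbf{b}_\uparrow,\mathbf{b}_\downarrow$ are two canonical bosonic modes and $\mathbf{s}^{\pm},\mathbf{s}^z$ act as a lowest/highest-weight (Verma) module of $\mathfrak{sl}_2$ with complex weight $p$. *)

theory Defs
  imports Complex_Main
begin

text \<open>Vectors of the dense domain: finite linear combinations of basis vectors |j,k,l>,
  represented by their coefficient functions with finite support.\<close>

type_synonym vec = "nat \<times> nat \<times> nat \<Rightarrow> complex"
type_synonym op = "vec \<Rightarrow> vec"

definition fin_vec :: "vec \<Rightarrow> bool" where
  "fin_vec x \<longleftrightarrow> finite {i. x i \<noteq> 0}"

definition basis_vec :: "nat \<Rightarrow> nat \<Rightarrow> nat \<Rightarrow> vec" where
  "basis_vec j k l = (\<lambda>i. if i = (j, k, l) then 1 else 0)"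

definition vac :: vec where "vac = basis_vec 0 0 0"

text \<open>Pairing with the bra <vac|: the coefficient of |0,0,0>.\<close>
definition vac_bra :: "vec \<Rightarrow> complex" where "vac_bra x = x (0, 0, 0)"

definition vsmul :: "complex \<Rightarrow> vec \<Rightarrow> vec" where
  "vsmul c x = (\<lambda>i. c * x i)"

definition vadd :: "vec \<Rightarrow> vec \<Rightarrow> vec" where "vadd x y = (\<lambda>i. x i + y i)"
definition vsub :: "vec \<Rightarrow> vec \<Rightarrow> vec" where "vsub x y = (\<lambda>i. x i - y i)"
definition oadd :: "op \<Rightarrow> op \<Rightarrow> op" where "oadd A B = (\<lambda>x. vadd (A x) (B x))"
definition osub :: "op \<Rightarrow> op \<Rightarrow> op" where "osub A B = (\<lambda>x. vsub (A x) (B x))"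
definition osmul :: "complex \<Rightarrow> op \<Rightarrow> op" where "osmul c A = (\<lambda>x. vsmul c (A x))"
definition ocomp :: "op \<Rightarrow> op \<Rightarrow> op" where "ocomp A B = (\<lambda>x. A (B x))"
definition oid :: op where "oid = (\<lambda>x. x)"
definition ocomm :: "op \<Rightarrow> op \<Rightarrow> op" where "ocomm A B = osub (ocomp A B) (ocomp B A)"

definition eta :: "real \<Rightarrow> complex" where "eta \<epsilon> = \<i> * complex_of_real \<epsilon>"
definition pw :: "real \<Rightarrow> complex" where "pw \<epsilon> = 1/2 - 1 / eta \<epsilon>"

text \<open>Coefficient formulas equivalent to the actions on basis vectors.\<close>
definition b_up :: op where     \<comment> \<open>b|j> = sqrt j |j-1>\<close>
  "b_up x = (\<lambda>(j, k, l). complex_of_real (sqrt (real (j + 1))) * x (j + 1, k, l))"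
definition b_up_dag :: op where \<comment> \<open>b\<dagger>|j> = sqrt (j+1) |j+1>\<close>
  "b_up_dag x = (\<lambda>(j, k, l). if j = 0 then 0
       else complex_of_real (sqrt (real j)) * x (j - 1, k, l))"
definition b_dn :: op where
  "b_dn x = (\<lambda>(j, k, l). complex_of_real (sqrt (real (k + 1))) * x (j, k + 1, l))"
definition b_dn_dag :: op where
  "b_dn_dag x = (\<lambda>(j, k, l). if k = 0 then 0
       else complex_of_real (sqrt (real k)) * x (j, k - 1, l))"
definition s_plus :: op where   \<comment> \<open>s+|l> = l |l-1>\<close>
  "s_plus x = (\<lambda>(j, k, l). of_nat (l + 1) * x (j, k, l + 1))"
definition s_minus :: "real \<Rightarrow> op" where  \<comment> \<open>s-|l> = (2p - l) |l+1>\<close>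
  "s_minus \<epsilon> x = (\<lambda>(j, k, l). if l = 0 then 0
       else (2 * pw \<epsilon> - of_nat (l - 1)) * x (j, k, l - 1))"
definition s_z :: "real \<Rightarrow> op" where
  "s_z \<epsilon> x = (\<lambda>(j, k, l). (pw \<epsilon> - of_nat l) * x (j, k, l))"

definition t_plus :: "real \<Rightarrow> op" where "t_plus \<epsilon> = b_up"
definition t_minus :: "real \<Rightarrow> op" where "t_minus \<epsilon> = osmul (eta \<epsilon>) b_up_dag"
definition u_plus :: "real \<Rightarrow> op" where "u_plus \<epsilon> = osmul (eta \<epsilon>) b_dn"
definition u_minus :: "real \<Rightarrow> op" where "u_minus \<epsilon> = b_dn_dag"
definition v_plus :: "real \<Rightarrow> op" where
  "v_plus \<epsilon> = osmul (eta \<epsilon>) (oadd (ocomp b_up b_dn) s_plus)"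
definition v_minus :: "real \<Rightarrow> op" where
  "v_minus \<epsilon> = osmul (eta \<epsilon>) (osub (ocomp b_up_dag b_dn_dag) (s_minus \<epsilon>))"
definition l_up :: "real \<Rightarrow> op" where
  "l_up \<epsilon> = osmul (eta \<epsilon>)
      (osub (oadd (ocomp b_up_dag b_up) (osmul (1/2) oid)) (s_z \<epsilon>))"
definition l_dn :: "real \<Rightarrow> op" where
  "l_dn \<epsilon> = osmul (eta \<epsilon>)
      (osub (oadd (ocomp b_dn_dag b_dn) (osmul (1/2) oid)) (s_z \<epsilon>))"
definition l_zero :: "real \<Rightarrow> op" where "l_zero \<epsilon> = oid"

definition generators :: "real \<Rightarrow> op set" where
  "generators \<epsilon> = {t_plus \<epsilon>, t_minus \<epsilon>, u_plus \<epsilon>, u_minus \<epsilon>, v_plus \<epsilon>, v_minus \<epsilon>,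
                    l_up \<epsilon>, l_dn \<epsilon>, l_zero \<epsilon>}"

definition op_eq :: "op \<Rightarrow> op \<Rightarrow> bool" (infix "\<doteq>" 50) where
  "A \<doteq> B \<longleftrightarrow> (\<forall>x. fin_vec x \<longrightarrow> A x = B x)"

definition zero_op :: op where "zero_op = (\<lambda>x. (\<lambda>_. 0))"

definition invariant_subspace :: "op set \<Rightarrow> vec set \<Rightarrow> bool" where
  "invariant_subspace S W \<longleftrightarrow>
     W \<subseteq> {x. fin_vec x} \<and> (\<lambda>_. 0) \<in> W \<and>
     (\<forall>x\<in>W. \<forall>y\<in>W. vadd x y \<in> W) \<and> (\<forall>c. \<forall>x\<in>W. vsmul c x \<in> W) \<and>
     (\<forall>A\<in>S. \<forall>x\<in>W. A x \<in> W)"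

definition irreducible_on_domain :: "op set \<Rightarrow> bool" where
  "irreducible_on_domain S \<longleftrightarrow>
     (\<forall>A\<in>S. \<forall>x. fin_vec x \<longrightarrow> fin_vec (A x)) \<and>
     (\<forall>W. invariant_subspace S W \<longrightarrow> W = {\<lambda>_. 0} \<or> W = {x. fin_vec x})"

end

theory Submission
  imports Defs
begin


lemmas O = ocomm_def osub_def ocomp_def oadd_def osmul_def vadd_def vsub_def vsmul_def oid_def zero_op_def
lemmas G = t_plus_def t_minus_def u_plus_def u_minus_def v_plus_def v_minus_def l_up_def l_dn_def l_zero_def

definition r :: "nat \<Rightarrow> complex" where "r n = complex_of_real (sqrt (real n))"

lemma bu: "b_up x (j,k,l) = r (Suc j) * x (Suc j, k, l)" by (simp add: b_up_def r_def)
lemma bd: "b_dn x (j,k,l) = r (Suc k) * x (j, Suc k, l)" by (simp add: b_dn_def r_def)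
lemma bud0: "b_up_dag x (0,k,l) = 0" by (simp add: b_up_dag_def)
lemma budS: "b_up_dag x (Suc j,k,l) = r (Suc j) * x (j, k, l)" by (simp add: b_up_dag_def r_def)
lemma bdd0: "b_dn_dag x (j,0,l) = 0" by (simp add: b_dn_dag_def)
lemma bddS: "b_dn_dag x (j,Suc k,l) = r (Suc k) * x (j, k, l)" by (simp add: b_dn_dag_def r_def)
lemma sp: "s_plus x (j,k,l) = of_nat (Suc l) * x (j, k, Suc l)" by (simp add: s_plus_def)
lemma sm0: "s_minus e x (j,k,0) = 0" by (simp add: s_minus_def)
lemma smS: "s_minus e x (j,k,Suc l) = (2 * pw e - of_nat l) * x (j, k, l)" by (simp add: s_minus_def)
lemma sz: "s_z e x (j,k,l) = (pw e - of_nat l) * x (j, k, l)" by (simp add: s_z_def)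
lemma sq: "r n * r n = of_nat n"
proof -
  have "sqrt (real n) * sqrt (real n) = real n" by simp
  hence "complex_of_real (sqrt (real n) * sqrt (real n)) = of_nat n" by simp
  thus ?thesis unfolding r_def by (simp only: of_real_mult)
qed
lemma sq2: "r n * (r n * z) = of_nat n * z"
  by (metis mult.assoc sq)
lemma r_nz: "n > 0 \<Longrightarrow> r n \<noteq> 0" by (simp add: r_def)
lemma r1: "r 1 = 1" "r (Suc 0) = 1" by (simp_all add: r_def)
lemmas P = bu bd bud0 budS bdd0 bddS sp sm0 smS sz

lemma eta_nz: "e \<noteq> 0 \<Longrightarrow> eta e \<noteq> 0" by (simp add: eta_def)
lemma c_nz: "e \<noteq> 0 \<Longrightarrow> 2 * pw e - of_nat l \<noteq> 0"
proof
  assume "e \<noteq> 0" "2 * pw e - of_nat l = 0"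
  hence "Im (2 * pw e - of_nat l) = 0" by simp
  moreover have "Im (2 * pw e - of_nat l) = 2 / e" using \<open>e \<noteq> 0\<close>
    by (simp add: pw_def eta_def Im_divide power2_eq_square)
  ultimately show False using \<open>e \<noteq> 0\<close> by simp
qed

lemma fin_map: "fin_vec x \<Longrightarrow> (\<And>i. y i \<noteq> 0 \<Longrightarrow> \<exists>i'. x i' \<noteq> 0 \<and> i = g i') \<Longrightarrow> fin_vec y"
  unfolding fin_vec_def
  by (rule finite_subset[of _ "g ` {i. x i \<noteq> 0}"]) (blast, simp)

lemma fin_vadd: "fin_vec x \<Longrightarrow> fin_vec y \<Longrightarrow> fin_vec (vadd x y)"
  unfolding fin_vec_def vadd_def
  by (rule finite_subset[of _ "{i. x i \<noteq> 0} \<union> {i. y i \<noteq> 0}"]) auto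
lemma fin_vsub: "fin_vec x \<Longrightarrow> fin_vec y \<Longrightarrow> fin_vec (vsub x y)"
  unfolding fin_vec_def vsub_def
  by (rule finite_subset[of _ "{i. x i \<noteq> 0} \<union> {i. y i \<noteq> 0}"]) auto
lemma fin_vsmul: "fin_vec x \<Longrightarrow> fin_vec (vsmul c x)"
  unfolding fin_vec_def vsmul_def
  by (rule finite_subset[of _ "{i. x i \<noteq> 0}"]) auto

lemma fin_bu: "fin_vec x \<Longrightarrow> fin_vec (b_up x)"
  apply (erule fin_map[where g="\<lambda>(j,k,l). (j - 1, k, l)"])
  subgoal for i by (cases i) (auto simp: bu intro!: exI[of _ "(Suc _, _, _)"])
  done
lemma fin_bd: "fin_vec x \<Longrightarrow> fin_vec (b_dn x)"
  apply (erule fin_map[where g="\<lambda>(j,k,l). (j, k - 1, l)"])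
  subgoal for i by (cases i) (auto simp: bd intro!: exI[of _ "(_, Suc _, _)"])
  done
lemma fin_sp: "fin_vec x \<Longrightarrow> fin_vec (s_plus x)"
  apply (erule fin_map[where g="\<lambda>(j,k,l). (j, k, l - 1)"])
  subgoal for i by (cases i) (auto simp: sp intro!: exI[of _ "(_, _, Suc _)"])
  done
lemma fin_sz: "fin_vec x \<Longrightarrow> fin_vec (s_z e x)"
  apply (erule fin_map[where g="\<lambda>i. i"])
  subgoal for i by (cases i) (auto simp: sz)
  done
lemma fin_bud: "fin_vec x \<Longrightarrow> fin_vec (b_up_dag x)"
  apply (erule fin_map[where g="\<lambda>(j,k,l). (Suc j, k, l)"])
  subgoal for i apply (cases i) subgoal for j k l by (cases j) (auto simp: bud0 budS) done
  done
lemma fin_bdd: "fin_vec x \<Longrightarrow> fin_vec (b_dn_dag x)"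
  apply (erule fin_map[where g="\<lambda>(j,k,l). (j, Suc k, l)"])
  subgoal for i apply (cases i) subgoal for j k l by (cases k) (auto simp: bdd0 bddS) done
  done
lemma fin_sm: "fin_vec x \<Longrightarrow> fin_vec (s_minus e x)"
  apply (erule fin_map[where g="\<lambda>(j,k,l). (j, k, Suc l)"])
  subgoal for i apply (cases i) subgoal for j k l by (cases l) (auto simp: sm0 smS) done
  done

lemmas FV = fin_vadd fin_vsub fin_vsmul fin_bu fin_bd fin_sp fin_sz fin_bud fin_bdd fin_sm

lemma fin_gens: "A \<in> generators e \<Longrightarrow> fin_vec x \<Longrightarrow> fin_vec (A x)"
  unfolding generators_def
  by (auto simp: G osmul_def oadd_def osub_def ocomp_def oid_def intro!: FV)

lemma descent:
  assumes cl: "\<And>x. x \<in> W \<Longrightarrow> A x \<in> W"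
  and pres: "\<And>x. P x \<Longrightarrow> P (A x)"
  and dec: "\<And>x n i. P x \<Longrightarrow> (\<forall>i. x i \<noteq> 0 \<longrightarrow> f i \<le> Suc n) \<Longrightarrow> A x i \<noteq> 0 \<Longrightarrow> f i \<le> n"
  and nz: "\<And>x i. P x \<Longrightarrow> x i \<noteq> 0 \<Longrightarrow> f i > 0 \<Longrightarrow> A x \<noteq> (\<lambda>_. 0)"
  shows "x \<in> W \<Longrightarrow> P x \<Longrightarrow> x \<noteq> (\<lambda>_. 0) \<Longrightarrow> (\<forall>i. x i \<noteq> 0 \<longrightarrow> f i \<le> n) \<Longrightarrow>
     \<exists>y\<in>W. P y \<and> y \<noteq> (\<lambda>_. 0) \<and> (\<forall>i. y i \<noteq> 0 \<longrightarrow> f i = 0)"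
proof (induction n arbitrary: x)
  case 0 then show ?case by force
next
  case (Suc n)
  show ?case
  proof (cases "\<exists>i. x i \<noteq> 0 \<and> f i > 0")
    case True
    then obtain i where "x i \<noteq> 0" "f i > 0" by blast
    hence "A x \<noteq> (\<lambda>_. 0)" using nz Suc.prems by blast
    moreover have "\<forall>i. A x i \<noteq> 0 \<longrightarrow> f i \<le> n" using dec Suc.prems by blast
    ultimately show ?thesis using Suc.IH[of "A x"] cl pres Suc.prems by blast
  next
    case False then show ?thesis using Suc.prems by force
  qed
qed

lemma bound: "fin_vec x \<Longrightarrow> \<exists>n. \<forall>i. x i \<noteq> 0 \<longrightarrow> (f i :: nat) \<le> n"
proof -
  assume "fin_vec x"
  hence "finite (f ` {i. x i \<noteq> 0})" unfolding fin_vec_def by simp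
  then obtain n where "\<forall>m \<in> f ` {i. x i \<noteq> 0}. m \<le> n" using finite_nat_set_iff_bounded_le by blast
  thus ?thesis by auto
qed

lemma vec_decomp: "finite S \<Longrightarrow> (\<forall>x. {i. x i \<noteq> 0} \<subseteq> S \<longrightarrow> x \<in> W)" if
  z: "(\<lambda>_. 0) \<in> W" and add: "\<forall>x\<in>W. \<forall>y\<in>W. vadd x y \<in> W" and sm: "\<forall>c. \<forall>x\<in>W. vsmul c x \<in> W"
  and bas: "\<And>j k l. basis_vec j k l \<in> W" for S W
proof (induction S rule: finite_induct)
  case empty
  have "x = (\<lambda>_. 0)" if "{i. x i \<noteq> 0} \<subseteq> {}" for x :: vec using that by (auto simp: fun_eq_iff)
  then show ?case using z by auto
next
  case (insert a S)
  show ?case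
  proof (intro allI impI)
    fix x :: vec assume sub: "{i. x i \<noteq> 0} \<subseteq> insert a S"
    obtain j k l where a: "a = (j,k,l)" by (cases a)
    have "{i. (x(a := 0)) i \<noteq> 0} \<subseteq> S" using sub by auto
    hence "x(a := 0) \<in> W" using insert.IH by blast
    moreover have "vsmul (x a) (basis_vec j k l) \<in> W" using sm bas by blast
    moreover have "x = vadd (x(a := 0)) (vsmul (x a) (basis_vec j k l))"
      by (auto simp: fun_eq_iff vadd_def vsmul_def basis_vec_def a)
    ultimately show "x \<in> W" using add by metis
  qed
qed



lemma upv: "u_plus e x (j,k,l) = eta e * (r (Suc k) * x (j, Suc k, l))"
  by (simp add: u_plus_def osmul_def vsmul_def bd)
lemma vpv: "(\<forall>i. x i \<noteq> 0 \<longrightarrow> fst i = 0 \<and> fst (snd i) = 0) \<Longrightarrow>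
   v_plus e x (j,k,l) = eta e * (of_nat (Suc l) * x (j, k, Suc l))"
proof -
  assume a: "\<forall>i. x i \<noteq> 0 \<longrightarrow> fst i = 0 \<and> fst (snd i) = 0"
  have "x (Suc j, Suc k, l) = 0" using a[rule_format, of "(Suc j, Suc k, l)"] by auto
  thus ?thesis by (simp add: v_plus_def osmul_def vsmul_def oadd_def vadd_def ocomp_def bu bd sp)
qed

lemma vac_in:
  assumes inv: "invariant_subspace (generators e) W" and e: "e \<noteq> 0"
    and xW: "x \<in> W" and xnz: "x \<noteq> (\<lambda>_. 0)"
  shows "vac \<in> W"
proof -
  have fin: "\<And>y. y \<in> W \<Longrightarrow> fin_vec y" using inv unfolding invariant_subspace_def by blast
  have cl: "\<And>A y. A \<in> generators e \<Longrightarrow> y \<in> W \<Longrightarrow> A y \<in> W" using inv unfolding invariant_subspace_def by blast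
  have sm: "\<And>c y. y \<in> W \<Longrightarrow> vsmul c y \<in> W" using inv unfolding invariant_subspace_def by blast
  have gen: "t_plus e \<in> generators e" "u_plus e \<in> generators e" "v_plus e \<in> generators e"
    by (simp_all add: generators_def)
  obtain n1 where n1: "\<forall>i. x i \<noteq> 0 \<longrightarrow> fst i \<le> n1" using bound[OF fin[OF xW], of fst] by blast
  have "\<exists>y\<in>W. True \<and> y \<noteq> (\<lambda>_. 0) \<and> (\<forall>i. y i \<noteq> 0 \<longrightarrow> fst i = 0)"
  proof (rule descent[where A="t_plus e" and P="\<lambda>_. True"])
    show "\<And>x. x \<in> W \<Longrightarrow> t_plus e x \<in> W" using cl gen by blast
    show "\<And>x n i. True \<Longrightarrow> (\<forall>i. x i \<noteq> 0 \<longrightarrow> fst i \<le> Suc n) \<Longrightarrow> t_plus e x i \<noteq> 0 \<Longrightarrow> fst i \<le> n"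
    proof -
      fix x :: vec and n i assume h: "\<forall>i. x i \<noteq> 0 \<longrightarrow> fst i \<le> Suc n" "t_plus e x i \<noteq> 0"
      obtain j k l where i: "i = (j,k,l)" by (cases i)
      have "x (Suc j, k, l) \<noteq> 0" using h(2) by (simp add: i t_plus_def bu)
      thus "fst i \<le> n" using h(1) i by force
    qed
    show "\<And>x i. True \<Longrightarrow> x i \<noteq> 0 \<Longrightarrow> fst i > 0 \<Longrightarrow> t_plus e x \<noteq> (\<lambda>_. 0)"
    proof
      fix x :: vec and i assume h: "x i \<noteq> 0" "fst i > 0" "t_plus e x = (\<lambda>_. 0)"
      obtain j k l where i: "i = (Suc j,k,l)" using h(2) by (cases i) (auto simp: gr0_conv_Suc)
      have "t_plus e x (j,k,l) = r (Suc j) * x (Suc j,k,l)" by (simp add: t_plus_def bu)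
      thus False using h r_nz[of "Suc j"] i by simp
    qed
  qed (use xW xnz n1 in auto)
  then obtain y1 where y1: "y1 \<in> W" "y1 \<noteq> (\<lambda>_. 0)" "\<forall>i. y1 i \<noteq> 0 \<longrightarrow> fst i = 0" by blast
  obtain n2 where n2: "\<forall>i. y1 i \<noteq> 0 \<longrightarrow> fst (snd i) \<le> n2" using bound[OF fin[OF y1(1)], of "\<lambda>i. fst (snd i)"] by blast
  have "\<exists>y\<in>W. (\<forall>i. y i \<noteq> 0 \<longrightarrow> fst i = 0) \<and> y \<noteq> (\<lambda>_. 0) \<and> (\<forall>i. y i \<noteq> 0 \<longrightarrow> fst (snd i) = 0)"
  proof (rule descent[where A="u_plus e" and P="\<lambda>y. \<forall>i. y i \<noteq> 0 \<longrightarrow> fst i = 0"])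
    show "\<And>x. x \<in> W \<Longrightarrow> u_plus e x \<in> W" using cl gen by blast
    show "\<And>x. (\<forall>i. x i \<noteq> 0 \<longrightarrow> fst i = 0) \<Longrightarrow> (\<forall>i. u_plus e x i \<noteq> 0 \<longrightarrow> fst i = 0)"
    proof (intro allI impI)
      fix x :: vec and i assume h: "\<forall>i. x i \<noteq> 0 \<longrightarrow> fst i = 0" "u_plus e x i \<noteq> 0"
      obtain j k l where i: "i = (j,k,l)" by (cases i)
      have "x (j, Suc k, l) \<noteq> 0" using h(2) by (simp add: i upv)
      thus "fst i = 0" using h(1) i by force
    qed
    show "\<And>x n i. (\<forall>i. x i \<noteq> 0 \<longrightarrow> fst i = 0) \<Longrightarrow> (\<forall>i. x i \<noteq> 0 \<longrightarrow> fst (snd i) \<le> Suc n) \<Longrightarrow> u_plus e x i \<noteq> 0 \<Longrightarrow> fst (snd i) \<le> n"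
    proof -
      fix x :: vec and n i assume h: "\<forall>i. x i \<noteq> 0 \<longrightarrow> fst (snd i) \<le> Suc n" "u_plus e x i \<noteq> 0"
      obtain j k l where i: "i = (j,k,l)" by (cases i)
      have "x (j, Suc k, l) \<noteq> 0" using h(2) by (simp add: i upv)
      thus "fst (snd i) \<le> n" using h(1) i by force
    qed
    show "\<And>x i. (\<forall>i. x i \<noteq> 0 \<longrightarrow> fst i = 0) \<Longrightarrow> x i \<noteq> 0 \<Longrightarrow> fst (snd i) > 0 \<Longrightarrow> u_plus e x \<noteq> (\<lambda>_. 0)"
    proof
      fix x :: vec and i assume h: "x i \<noteq> 0" "fst (snd i) > 0" "u_plus e x = (\<lambda>_. 0)"
      obtain j k l where i: "i = (j,Suc k,l)" using h(2) by (cases i) (auto simp: gr0_conv_Suc)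
      have "u_plus e x (j,k,l) = eta e * (r (Suc k) * x (j,Suc k,l))" by (simp add: upv)
      thus False using h r_nz[of "Suc k"] i eta_nz[OF e] by simp
    qed
  qed (use y1 n2 in auto)
  then obtain y2 where y2: "y2 \<in> W" "y2 \<noteq> (\<lambda>_. 0)" "\<forall>i. y2 i \<noteq> 0 \<longrightarrow> fst i = 0 \<and> fst (snd i) = 0" by blast
  obtain n3 where n3: "\<forall>i. y2 i \<noteq> 0 \<longrightarrow> snd (snd i) \<le> n3" using bound[OF fin[OF y2(1)], of "\<lambda>i. snd (snd i)"] by blast
  have "\<exists>y\<in>W. (\<forall>i. y i \<noteq> 0 \<longrightarrow> fst i = 0 \<and> fst (snd i) = 0) \<and> y \<noteq> (\<lambda>_. 0) \<and> (\<forall>i. y i \<noteq> 0 \<longrightarrow> snd (snd i) = 0)"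
  proof (rule descent[where A="v_plus e" and P="\<lambda>y. \<forall>i. y i \<noteq> 0 \<longrightarrow> fst i = 0 \<and> fst (snd i) = 0"])
    show "\<And>x. x \<in> W \<Longrightarrow> v_plus e x \<in> W" using cl gen by blast
    show "\<And>x. (\<forall>i. x i \<noteq> 0 \<longrightarrow> fst i = 0 \<and> fst (snd i) = 0) \<Longrightarrow> (\<forall>i. v_plus e x i \<noteq> 0 \<longrightarrow> fst i = 0 \<and> fst (snd i) = 0)"
    proof (intro allI impI)
      fix x :: vec and i assume h: "\<forall>i. x i \<noteq> 0 \<longrightarrow> fst i = 0 \<and> fst (snd i) = 0" "v_plus e x i \<noteq> 0"
      obtain j k l where i: "i = (j,k,l)" by (cases i)
      have "x (j, k, Suc l) \<noteq> 0" using h(2) by (simp add: i vpv[OF h(1)])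
      thus "fst i = 0 \<and> fst (snd i) = 0" using h(1) i by force
    qed
    show "\<And>x n i. (\<forall>i. x i \<noteq> 0 \<longrightarrow> fst i = 0 \<and> fst (snd i) = 0) \<Longrightarrow> (\<forall>i. x i \<noteq> 0 \<longrightarrow> snd (snd i) \<le> Suc n) \<Longrightarrow> v_plus e x i \<noteq> 0 \<Longrightarrow> snd (snd i) \<le> n"
    proof -
      fix x :: vec and n i assume h0: "\<forall>i. x i \<noteq> 0 \<longrightarrow> fst i = 0 \<and> fst (snd i) = 0"
        and h: "\<forall>i. x i \<noteq> 0 \<longrightarrow> snd (snd i) \<le> Suc n" "v_plus e x i \<noteq> 0"
      obtain j k l where i: "i = (j,k,l)" by (cases i)
      have "x (j, k, Suc l) \<noteq> 0" using h(2) by (simp add: i vpv[OF h0])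
      thus "snd (snd i) \<le> n" using h(1) i by force
    qed
    show "\<And>x i. (\<forall>i. x i \<noteq> 0 \<longrightarrow> fst i = 0 \<and> fst (snd i) = 0) \<Longrightarrow> x i \<noteq> 0 \<Longrightarrow> snd (snd i) > 0 \<Longrightarrow> v_plus e x \<noteq> (\<lambda>_. 0)"
    proof
      fix x :: vec and i assume h0: "\<forall>i. x i \<noteq> 0 \<longrightarrow> fst i = 0 \<and> fst (snd i) = 0"
        and h: "x i \<noteq> 0" "snd (snd i) > 0" "v_plus e x = (\<lambda>_. 0)"
      obtain j k l where i: "i = (j,k,Suc l)" using h(2) by (cases i) (auto simp: gr0_conv_Suc)
      have "v_plus e x (j,k,l) = eta e * (of_nat (Suc l) * x (j,k,Suc l))" by (simp add: vpv[OF h0])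
      thus False using h i eta_nz[OF e] by (simp del: of_nat_Suc)
    qed
  qed (use y2 n3 in auto)
  then obtain y where y: "y \<in> W" "y \<noteq> (\<lambda>_. 0)" "\<forall>i. y i \<noteq> 0 \<longrightarrow> i = (0,0,0)"
    by (metis prod.collapse)
  have c: "y (0,0,0) \<noteq> 0"
  proof
    assume h: "y (0,0,0) = 0"
    have "y i = 0" for i using y(3)[rule_format, of i] h by (cases "i = (0,0,0)") auto
    thus False using y(2) by blast
  qed
  have yeq: "y = vsmul (y (0,0,0)) vac"
  proof
    fix i show "y i = vsmul (y (0,0,0)) vac i"
      using y(3)[rule_format, of i] by (cases "i = (0,0,0)") (auto simp: vsmul_def vac_def basis_vec_def)
  qed
  have "vsmul (1 / y (0,0,0)) (vsmul (y (0,0,0)) vac) = vac" using c by (simp add: vsmul_def fun_eq_iff)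
  hence "vsmul (1 / y (0,0,0)) y = vac" by (subst yeq)
  thus ?thesis using sm[OF y(1)] by metis
qed



lemma tm_basis: "t_minus e (basis_vec j k l) = vsmul (eta e * r (Suc j)) (basis_vec (Suc j) k l)"
  apply (rule ext) subgoal for i apply (cases i) subgoal for a b c by (cases a) (auto simp: t_minus_def osmul_def vsmul_def basis_vec_def bud0 budS) done done
lemma um_basis: "u_minus e (basis_vec j k l) = vsmul (r (Suc k)) (basis_vec j (Suc k) l)"
  apply (rule ext) subgoal for i apply (cases i) subgoal for a b c by (cases b) (auto simp: u_minus_def vsmul_def basis_vec_def bdd0 bddS) done done
lemma vm_basis: "v_minus e (basis_vec 0 0 l) =
   vsmul (eta e) (vsub (basis_vec 1 1 l) (vsmul (2 * pw e - of_nat l) (basis_vec 0 0 (Suc l))))"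
  apply (rule ext) subgoal for i apply (cases i) subgoal for a b c
    by (cases a; cases b; cases c) (auto simp: v_minus_def osmul_def osub_def ocomp_def vsub_def vsmul_def basis_vec_def bud0 budS bdd0 bddS sm0 smS r1) done done

lemma tm_lin: "t_minus e (vsmul c x) = vsmul c (t_minus e x)"
  apply (rule ext) subgoal for i apply (cases i) subgoal for a b d by (cases a) (auto simp: t_minus_def osmul_def vsmul_def bud0 budS) done done
lemma vsmul_vsmul: "vsmul c (vsmul d x) = vsmul (c * d) x" by (simp add: vsmul_def fun_eq_iff)
lemma vsmul_inv: "c \<noteq> 0 \<Longrightarrow> vsmul (1 / c) (vsmul c x) = x" by (simp add: vsmul_def fun_eq_iff)

lemma all_basis:
  assumes inv: "invariant_subspace (generators e) W" and e: "e \<noteq> 0" and v: "vac \<in> W"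
  shows "basis_vec j k l \<in> W"
proof -
  have cl: "\<And>A y. A \<in> generators e \<Longrightarrow> y \<in> W \<Longrightarrow> A y \<in> W" using inv unfolding invariant_subspace_def by blast
  have sm: "\<And>c y. y \<in> W \<Longrightarrow> vsmul c y \<in> W" using inv unfolding invariant_subspace_def by blast
  have ad: "\<And>x y. x \<in> W \<Longrightarrow> y \<in> W \<Longrightarrow> vadd x y \<in> W" using inv unfolding invariant_subspace_def by blast
  have gen: "t_minus e \<in> generators e" "u_minus e \<in> generators e" "v_minus e \<in> generators e"
    by (simp_all add: generators_def)
  have L: "basis_vec 0 0 l \<in> W" for l
  proof (induction l)
    case 0 then show ?case using v by (simp add: vac_def)
  next
    case (Suc l)
    let ?c = "2 * pw e - of_nat l"
    have a: "v_minus e (basis_vec 0 0 l) \<in> W" using cl gen Suc by blast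
    have b: "t_minus e (u_minus e (basis_vec 0 0 l)) \<in> W" using cl gen Suc by blast
    have eq: "basis_vec 0 0 (Suc l) = vsmul (1 / (eta e * ?c))
       (vadd (t_minus e (u_minus e (basis_vec 0 0 l))) (vsmul (-1) (v_minus e (basis_vec 0 0 l))))"
      unfolding um_basis tm_lin tm_basis vm_basis vsmul_vsmul using eta_nz[OF e] c_nz[OF e, of l]
      by (simp add: vsmul_def vadd_def vsub_def fun_eq_iff r1 basis_vec_def field_simps)
    show ?case unfolding eq using a b sm ad by blast
  qed
  have J: "basis_vec j 0 l \<in> W" for j
  proof (induction j)
    case 0 then show ?case using L by simp
  next
    case (Suc j)
    have "vsmul (1 / (eta e * r (Suc j))) (t_minus e (basis_vec j 0 l)) \<in> W" using cl gen Suc sm by blast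
    thus ?case using eta_nz[OF e] r_nz[of "Suc j"] by (simp add: tm_basis vsmul_inv)
  qed
  show ?thesis
  proof (induction k)
    case 0 then show ?case using J by simp
  next
    case (Suc k)
    have "vsmul (1 / r (Suc k)) (u_minus e (basis_vec j k l)) \<in> W" using cl gen Suc sm by blast
    thus ?case using r_nz[of "Suc k"] by (simp add: um_basis vsmul_inv)
  qed
qed

lemma irred: "e \<noteq> 0 \<Longrightarrow> irreducible_on_domain (generators e)"
  unfolding irreducible_on_domain_def
proof (intro conjI ballI allI impI)
  fix A x assume "A \<in> generators e" "fin_vec x" thus "fin_vec (A x)" by (rule fin_gens)
next
  fix W assume e: "e \<noteq> 0" and inv: "invariant_subspace (generators e) W"
  show "W = {\<lambda>_. 0} \<or> W = {x. fin_vec x}"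
  proof (cases "\<exists>x\<in>W. x \<noteq> (\<lambda>_. 0)")
    case False
    then show ?thesis using inv unfolding invariant_subspace_def by blast
  next
    case True
    then obtain x where "x \<in> W" "x \<noteq> (\<lambda>_. 0)" by blast
    hence v: "vac \<in> W" using vac_in[OF inv e] by blast
    have z: "(\<lambda>_. 0) \<in> W" and add: "\<forall>x\<in>W. \<forall>y\<in>W. vadd x y \<in> W" and sm: "\<forall>c. \<forall>x\<in>W. vsmul c x \<in> W"
      and sub: "W \<subseteq> {x. fin_vec x}"
      using inv unfolding invariant_subspace_def by blast+
    have "x \<in> W" if "fin_vec x" for x
      using vec_decomp[OF z add sm all_basis[OF inv e v], of "{i. x i \<noteq> 0}"] that
      unfolding fin_vec_def by blast
    thus ?thesis using sub by blast
  qed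
qed


lemma c3: "(n = 0 \<Longrightarrow> P) \<Longrightarrow> (n = Suc 0 \<Longrightarrow> P) \<Longrightarrow> (\<And>m. n = Suc (Suc m) \<Longrightarrow> P) \<Longrightarrow> P"
  by (metis not0_implies_Suc)


lemma R0: "(ocomm (u_plus e) (t_plus e)) \<doteq> (zero_op)"
  unfolding op_eq_def O G
  apply (intro allI impI ext) apply clarify subgoal for x j k l by (cases j rule: c3; cases k rule: c3; cases l rule: c3; simp add: P algebra_simps sq sq2; (simp add: divide_simps; simp add: algebra_simps)?) done

lemma R1: "(ocomm (u_plus e) (t_minus e)) \<doteq> (zero_op)"
  unfolding op_eq_def O G
  apply (intro allI impI ext) apply clarify subgoal for x j k l by (cases j rule: c3; cases k rule: c3; cases l rule: c3; simp add: P algebra_simps sq sq2; (simp add: divide_simps; simp add: algebra_simps)?) done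

lemma R2: "(ocomm (u_minus e) (t_plus e)) \<doteq> (zero_op)"
  unfolding op_eq_def O G
  apply (intro allI impI ext) apply clarify subgoal for x j k l by (cases j rule: c3; cases k rule: c3; cases l rule: c3; simp add: P algebra_simps sq sq2; (simp add: divide_simps; simp add: algebra_simps)?) done

lemma R3: "(ocomm (u_minus e) (t_minus e)) \<doteq> (zero_op)"
  unfolding op_eq_def O G
  apply (intro allI impI ext) apply clarify subgoal for x j k l by (cases j rule: c3; cases k rule: c3; cases l rule: c3; simp add: P algebra_simps sq sq2; (simp add: divide_simps; simp add: algebra_simps)?) done

lemma R4: "(ocomm (u_plus e) (v_plus e)) \<doteq> (zero_op)"
  unfolding op_eq_def O G
  apply (intro allI impI ext) apply clarify subgoal for x j k l by (cases j rule: c3; cases k rule: c3; cases l rule: c3; simp add: P algebra_simps sq sq2; (simp add: divide_simps; simp add: algebra_simps)?) done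

lemma R5: "(ocomm (u_minus e) (v_minus e)) \<doteq> (zero_op)"
  unfolding op_eq_def O G
  apply (intro allI impI ext) apply clarify subgoal for x j k l by (cases j rule: c3; cases k rule: c3; cases l rule: c3; simp add: P algebra_simps sq sq2; (simp add: divide_simps; simp add: algebra_simps)?) done

lemma R6: "(ocomm (t_plus e) (v_plus e)) \<doteq> (zero_op)"
  unfolding op_eq_def O G
  apply (intro allI impI ext) apply clarify subgoal for x j k l by (cases j rule: c3; cases k rule: c3; cases l rule: c3; simp add: P algebra_simps sq sq2; (simp add: divide_simps; simp add: algebra_simps)?) done

lemma R7: "(ocomm (t_minus e) (v_minus e)) \<doteq> (zero_op)"
  unfolding op_eq_def O G
  apply (intro allI impI ext) apply clarify subgoal for x j k l by (cases j rule: c3; cases k rule: c3; cases l rule: c3; simp add: P algebra_simps sq sq2; (simp add: divide_simps; simp add: algebra_simps)?) done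

lemma R8: "(ocomm (l_up e) (u_plus e)) \<doteq> (zero_op)"
  unfolding op_eq_def O G
  apply (intro allI impI ext) apply clarify subgoal for x j k l by (cases j rule: c3; cases k rule: c3; cases l rule: c3; simp add: P algebra_simps sq sq2; (simp add: divide_simps; simp add: algebra_simps)?) done

lemma R9: "(ocomm (l_up e) (u_minus e)) \<doteq> (zero_op)"
  unfolding op_eq_def O G
  apply (intro allI impI ext) apply clarify subgoal for x j k l by (cases j rule: c3; cases k rule: c3; cases l rule: c3; simp add: P algebra_simps sq sq2; (simp add: divide_simps; simp add: algebra_simps)?) done

lemma R10: "(ocomm (l_dn e) (t_plus e)) \<doteq> (zero_op)"
  unfolding op_eq_def O G
  apply (intro allI impI ext) apply clarify subgoal for x j k l by (cases j rule: c3; cases k rule: c3; cases l rule: c3; simp add: P algebra_simps sq sq2; (simp add: divide_simps; simp add: algebra_simps)?) done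

lemma R11: "(ocomm (l_dn e) (t_minus e)) \<doteq> (zero_op)"
  unfolding op_eq_def O G
  apply (intro allI impI ext) apply clarify subgoal for x j k l by (cases j rule: c3; cases k rule: c3; cases l rule: c3; simp add: P algebra_simps sq sq2; (simp add: divide_simps; simp add: algebra_simps)?) done

lemma R12: "(ocomm (l_up e) (l_dn e)) \<doteq> (zero_op)"
  unfolding op_eq_def O G
  apply (intro allI impI ext) apply clarify subgoal for x j k l by (cases j rule: c3; cases k rule: c3; cases l rule: c3; simp add: P algebra_simps sq sq2; (simp add: divide_simps; simp add: algebra_simps)?) done

lemma R13: "(ocomm (l_up e) (t_plus e)) \<doteq> (osmul (- eta e) (t_plus e))"
  unfolding op_eq_def O G
  apply (intro allI impI ext) apply clarify subgoal for x j k l by (cases j rule: c3; cases k rule: c3; cases l rule: c3; simp add: P algebra_simps sq sq2; (simp add: divide_simps; simp add: algebra_simps)?) done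

lemma R14: "(ocomm (l_up e) (t_minus e)) \<doteq> (osmul (eta e) (t_minus e))"
  unfolding op_eq_def O G
  apply (intro allI impI ext) apply clarify subgoal for x j k l by (cases j rule: c3; cases k rule: c3; cases l rule: c3; simp add: P algebra_simps sq sq2; (simp add: divide_simps; simp add: algebra_simps)?) done

lemma R15: "(ocomm (l_dn e) (u_plus e)) \<doteq> (osmul (- eta e) (u_plus e))"
  unfolding op_eq_def O G
  apply (intro allI impI ext) apply clarify subgoal for x j k l by (cases j rule: c3; cases k rule: c3; cases l rule: c3; simp add: P algebra_simps sq sq2; (simp add: divide_simps; simp add: algebra_simps)?) done

lemma R16: "(ocomm (l_dn e) (u_minus e)) \<doteq> (osmul (eta e) (u_minus e))"
  unfolding op_eq_def O G
  apply (intro allI impI ext) apply clarify subgoal for x j k l by (cases j rule: c3; cases k rule: c3; cases l rule: c3; simp add: P algebra_simps sq sq2; (simp add: divide_simps; simp add: algebra_simps)?) done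

lemma R17: "(ocomm (u_plus e) (v_minus e)) \<doteq> (osmul (eta e) (t_minus e))"
  unfolding op_eq_def O G
  apply (intro allI impI ext) apply clarify subgoal for x j k l by (cases j rule: c3; cases k rule: c3; cases l rule: c3; simp add: P algebra_simps sq sq2; (simp add: divide_simps; simp add: algebra_simps)?) done

lemma R18: "(ocomm (u_minus e) (v_plus e)) \<doteq> (osmul (- eta e) (t_plus e))"
  unfolding op_eq_def O G
  apply (intro allI impI ext) apply clarify subgoal for x j k l by (cases j rule: c3; cases k rule: c3; cases l rule: c3; simp add: P algebra_simps sq sq2; (simp add: divide_simps; simp add: algebra_simps)?) done

lemma R19: "(ocomm (t_plus e) (v_minus e)) \<doteq> (osmul (eta e) (u_minus e))"
  unfolding op_eq_def O G
  apply (intro allI impI ext) apply clarify subgoal for x j k l by (cases j rule: c3; cases k rule: c3; cases l rule: c3; simp add: P algebra_simps sq sq2; (simp add: divide_simps; simp add: algebra_simps)?) done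

lemma R20: "(ocomm (t_minus e) (v_plus e)) \<doteq> (osmul (- eta e) (u_plus e))"
  unfolding op_eq_def O G
  apply (intro allI impI ext) apply clarify subgoal for x j k l by (cases j rule: c3; cases k rule: c3; cases l rule: c3; simp add: P algebra_simps sq sq2; (simp add: divide_simps; simp add: algebra_simps)?) done

lemma R21: "(ocomm (l_up e) (v_plus e)) \<doteq> (osmul (- eta e) (v_plus e))"
  unfolding op_eq_def O G
  apply (intro allI impI ext) apply clarify subgoal for x j k l by (cases j rule: c3; cases k rule: c3; cases l rule: c3; simp add: P algebra_simps sq sq2; (simp add: divide_simps; simp add: algebra_simps)?) done

lemma R22: "(ocomm (l_up e) (v_minus e)) \<doteq> (osmul (eta e) (v_minus e))"
  unfolding op_eq_def O G
  apply (intro allI impI ext) apply clarify subgoal for x j k l by (cases j rule: c3; cases k rule: c3; cases l rule: c3; simp add: P algebra_simps sq sq2; (simp add: divide_simps; simp add: algebra_simps)?) done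

lemma R23: "(ocomm (l_dn e) (v_plus e)) \<doteq> (osmul (- eta e) (v_plus e))"
  unfolding op_eq_def O G
  apply (intro allI impI ext) apply clarify subgoal for x j k l by (cases j rule: c3; cases k rule: c3; cases l rule: c3; simp add: P algebra_simps sq sq2; (simp add: divide_simps; simp add: algebra_simps)?) done

lemma R24: "(ocomm (l_dn e) (v_minus e)) \<doteq> (osmul (eta e) (v_minus e))"
  unfolding op_eq_def O G
  apply (intro allI impI ext) apply clarify subgoal for x j k l by (cases j rule: c3; cases k rule: c3; cases l rule: c3; simp add: P algebra_simps sq sq2; (simp add: divide_simps; simp add: algebra_simps)?) done

lemma R25: "(ocomm (v_plus e) (v_minus e)) \<doteq> (osmul (eta e) (oadd (l_up e) (l_dn e)))"
  unfolding op_eq_def O G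
  apply (intro allI impI ext) apply clarify subgoal for x j k l by (cases j rule: c3; cases k rule: c3; cases l rule: c3; simp add: P algebra_simps sq sq2; (simp add: divide_simps; simp add: algebra_simps)?) done

lemma R26: "(ocomm (t_plus e) (t_minus e)) \<doteq> (osmul (eta e) (l_zero e))"
  unfolding op_eq_def O G
  apply (intro allI impI ext) apply clarify subgoal for x j k l by (cases j rule: c3; cases k rule: c3; cases l rule: c3; simp add: P algebra_simps sq sq2; (simp add: divide_simps; simp add: algebra_simps)?) done

lemma R27: "(ocomm (u_plus e) (u_minus e)) \<doteq> (osmul (eta e) (l_zero e))"
  unfolding op_eq_def O G
  apply (intro allI impI ext) apply clarify subgoal for x j k l by (cases j rule: c3; cases k rule: c3; cases l rule: c3; simp add: P algebra_simps sq sq2; (simp add: divide_simps; simp add: algebra_simps)?) done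

lemma R28: "(ocomm (l_up e) (l_zero e)) \<doteq> (zero_op)"
  unfolding op_eq_def O G
  apply (intro allI impI ext) apply clarify subgoal for x j k l by (cases j rule: c3; cases k rule: c3; cases l rule: c3; simp add: P algebra_simps sq sq2; (simp add: divide_simps; simp add: algebra_simps)?) done

lemma R29: "(ocomm (l_dn e) (l_zero e)) \<doteq> (zero_op)"
  unfolding op_eq_def O G
  apply (intro allI impI ext) apply clarify subgoal for x j k l by (cases j rule: c3; cases k rule: c3; cases l rule: c3; simp add: P algebra_simps sq sq2; (simp add: divide_simps; simp add: algebra_simps)?) done

lemma R30: "(ocomm (u_plus e) (l_zero e)) \<doteq> (zero_op)"
  unfolding op_eq_def O G
  apply (intro allI impI ext) apply clarify subgoal for x j k l by (cases j rule: c3; cases k rule: c3; cases l rule: c3; simp add: P algebra_simps sq sq2; (simp add: divide_simps; simp add: algebra_simps)?) done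

lemma R31: "(ocomm (u_minus e) (l_zero e)) \<doteq> (zero_op)"
  unfolding op_eq_def O G
  apply (intro allI impI ext) apply clarify subgoal for x j k l by (cases j rule: c3; cases k rule: c3; cases l rule: c3; simp add: P algebra_simps sq sq2; (simp add: divide_simps; simp add: algebra_simps)?) done

lemma R32: "(ocomm (v_plus e) (l_zero e)) \<doteq> (zero_op)"
  unfolding op_eq_def O G
  apply (intro allI impI ext) apply clarify subgoal for x j k l by (cases j rule: c3; cases k rule: c3; cases l rule: c3; simp add: P algebra_simps sq sq2; (simp add: divide_simps; simp add: algebra_simps)?) done

lemma R33: "(ocomm (v_minus e) (l_zero e)) \<doteq> (zero_op)"
  unfolding op_eq_def O G
  apply (intro allI impI ext) apply clarify subgoal for x j k l by (cases j rule: c3; cases k rule: c3; cases l rule: c3; simp add: P algebra_simps sq sq2; (simp add: divide_simps; simp add: algebra_simps)?) done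

lemma R34: "(ocomm (t_plus e) (l_zero e)) \<doteq> (zero_op)"
  unfolding op_eq_def O G
  apply (intro allI impI ext) apply clarify subgoal for x j k l by (cases j rule: c3; cases k rule: c3; cases l rule: c3; simp add: P algebra_simps sq sq2; (simp add: divide_simps; simp add: algebra_simps)?) done

lemma R35: "(ocomm (t_minus e) (l_zero e)) \<doteq> (zero_op)"
  unfolding op_eq_def O G
  apply (intro allI impI ext) apply clarify subgoal for x j k l by (cases j rule: c3; cases k rule: c3; cases l rule: c3; simp add: P algebra_simps sq sq2; (simp add: divide_simps; simp add: algebra_simps)?) done

lemmas R = R0 R1 R2 R3 R4 R5 R6 R7 R8 R9 R10 R11 R12 R13 R14 R15 R16 R17 R18 R19 R20 R21 R22 R23 R24 R25 R26 R27 R28 R29 R30 R31 R32 R33 R34 R35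
lemma half_pw: "e \<noteq> 0 \<Longrightarrow> eta e * (1/2 - pw e) = 1"
  by (simp add: pw_def eta_nz)

lemma B1: "e \<noteq> 0 \<Longrightarrow> l_up e vac = vac"
  apply (rule ext) subgoal for i apply (cases i) subgoal for j k l
    using half_pw[of e] by (cases j; cases k; cases l) (auto simp: G O P vac_def basis_vec_def algebra_simps) done done
lemma B2: "e \<noteq> 0 \<Longrightarrow> l_dn e vac = vac"
  apply (rule ext) subgoal for i apply (cases i) subgoal for j k l
    using half_pw[of e] by (cases j; cases k; cases l) (auto simp: G O P vac_def basis_vec_def algebra_simps) done done
lemma B3: "e \<noteq> 0 \<Longrightarrow> vac_bra (l_up e x) = vac_bra x \<and> vac_bra (l_zero e x) = vac_bra x \<and> vac_bra (l_dn e x) = vac_bra x"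
proof -
  assume e: "e \<noteq> 0"
  have 1: "l_up e x (0,0,0) = eta e * (1/2 - pw e) * x (0,0,0)" by (simp add: G O P algebra_simps)
  have 2: "l_dn e x (0,0,0) = eta e * (1/2 - pw e) * x (0,0,0)" by (simp add: G O P algebra_simps)
  show ?thesis using 1 2 half_pw[OF e] by (simp add: vac_bra_def G O)
qed
lemma B4: "t_plus e vac = (\<lambda>_. 0) \<and> u_plus e vac = (\<lambda>_. 0) \<and> v_plus e vac = (\<lambda>_. 0)"
  by (auto simp: fun_eq_iff G O P vac_def basis_vec_def)
lemma B5: "vac_bra (t_minus e x) = 0 \<and> vac_bra (u_minus e x) = 0 \<and> vac_bra (v_minus e x) = 0"
  by (simp add: vac_bra_def G O P)

theorem mainTheorem2:
  fixes \<epsilon> :: real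
  assumes "\<epsilon> > 0"
  defines "\<eta> \<equiv> eta \<epsilon>"
      and "tp \<equiv> t_plus \<epsilon>" and "tm \<equiv> t_minus \<epsilon>"
      and "up \<equiv> u_plus \<epsilon>" and "um \<equiv> u_minus \<epsilon>"
      and "vp \<equiv> v_plus \<epsilon>" and "vm \<equiv> v_minus \<epsilon>"
      and "lu \<equiv> l_up \<epsilon>" and "ld \<equiv> l_dn \<epsilon>" and "l0 \<equiv> l_zero \<epsilon>"
  shows
    \<comment> \<open>irreducibility of the representation generated by the operators\<close>
    "irreducible_on_domain (generators \<epsilon>)
   \<comment> \<open>commutation relations of g\<close>
   \<and> ocomm up tp \<doteq> zero_op \<and> ocomm up tm \<doteq> zero_op
   \<and> ocomm um tp \<doteq> zero_op \<and> ocomm um tm \<doteq> zero_op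
   \<and> ocomm up vp \<doteq> zero_op \<and> ocomm um vm \<doteq> zero_op
   \<and> ocomm tp vp \<doteq> zero_op \<and> ocomm tm vm \<doteq> zero_op
   \<and> ocomm lu up \<doteq> zero_op \<and> ocomm lu um \<doteq> zero_op
   \<and> ocomm ld tp \<doteq> zero_op \<and> ocomm ld tm \<doteq> zero_op
   \<and> ocomm lu ld \<doteq> zero_op
   \<and> ocomm lu tp \<doteq> osmul (- \<eta>) tp \<and> ocomm lu tm \<doteq> osmul \<eta> tm
   \<and> ocomm ld up \<doteq> osmul (- \<eta>) up \<and> ocomm ld um \<doteq> osmul \<eta> um
   \<and> ocomm up vm \<doteq> osmul \<eta> tm \<and> ocomm um vp \<doteq> osmul (- \<eta>) tp
   \<and> ocomm tp vm \<doteq> osmul \<eta> um \<and> ocomm tm vp \<doteq> osmul (- \<eta>) up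
   \<and> ocomm lu vp \<doteq> osmul (- \<eta>) vp \<and> ocomm lu vm \<doteq> osmul \<eta> vm
   \<and> ocomm ld vp \<doteq> osmul (- \<eta>) vp \<and> ocomm ld vm \<doteq> osmul \<eta> vm
   \<and> ocomm vp vm \<doteq> osmul \<eta> (oadd lu ld)
   \<and> ocomm tp tm \<doteq> osmul \<eta> l0 \<and> ocomm up um \<doteq> osmul \<eta> l0
   \<and> ocomm lu l0 \<doteq> zero_op \<and> ocomm ld l0 \<doteq> zero_op
   \<and> ocomm up l0 \<doteq> zero_op \<and> ocomm um l0 \<doteq> zero_op
   \<and> ocomm vp l0 \<doteq> zero_op \<and> ocomm vm l0 \<doteq> zero_op
   \<and> ocomm tp l0 \<doteq> zero_op \<and> ocomm tm l0 \<doteq> zero_op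
   \<comment> \<open>boundary requirements\<close>
   \<and> lu vac = vac \<and> l0 vac = vac \<and> ld vac = vac
   \<and> (\<forall>x. fin_vec x \<longrightarrow> vac_bra (lu x) = vac_bra x \<and> vac_bra (l0 x) = vac_bra x
                          \<and> vac_bra (ld x) = vac_bra x)
   \<and> tp vac = (\<lambda>_. 0) \<and> up vac = (\<lambda>_. 0) \<and> vp vac = (\<lambda>_. 0)
   \<and> (\<forall>x. fin_vec x \<longrightarrow> vac_bra (tm x) = 0 \<and> vac_bra (um x) = 0 \<and> vac_bra (vm x) = 0)"
  proof -
  have e: "\<epsilon> \<noteq> 0" using assms(1) by simp
  show ?thesis
    unfolding \<eta>_def tp_def tm_def up_def um_def vp_def vm_def lu_def ld_def l0_def
    using irred[OF e] R B1[OF e] B2[OF e] B3[OF e] B4 B5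
    by (simp add: l_zero_def oid_def)
qed

end
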